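(* Let $n\ge2$ and let $\zeta:\mathfrak{g}_n\to\mathbb{R}$ be a normalized Lie quasi-state on the unitary motion algebra $\mathfrak{g}_n=\mathbb{C}^n\rtimes\mathfrak{u}(n)$. Define $f_\zeta:\mathbb{C}^n\to\mathbb{R}$ by $f_\zeta(w)=\zeta(-iw,\,i\cdot\mathbf{1})$. Then: (i) $f_\zeta$ is a generalized frame function; (ii) if $\zeta$ is continuous, then $f_\zeta$ is continuous and sublinear; (iii) $\zeta$ is uniquely determined by $f_\zeta$; in particular $f_\zeta\equiv0$ implies $\zeta\equiv0$.
   Context: $\mathfrak{g}_n$ is the real Lie algebra $\mathbb{C}^n\times\mathfrak{u}(n)$ with bracket $[(v,X),(w,Y)]=(Xw-Yv,[X,Y])$, where $\mathfrak{u}(n)$ consists of the skew-Hermitian matrices with respect to a fixed Hermitian inner product on $\mathbb{C}^n$, and $\mathbf{1}$ is the identity. A Lie quasi-state is $\zeta$ with $\zeta(aA+bB)=a\zeta(A)+b\zeta(B)$ for all $a,b\in\mathbb{R}$ and commuting $A,B$; it is normalized if $\zeta(v,0)=\zeta(0,X)=0$ for all $v\in\mathbb{C}^n$, $X\in\mathfrak{u}(n)$. A generalized frame function is $f:\mathbb{C}^n\to\mathbb{R}$ with $f(0)=0$ and $f(u+v)=f(u)+f(v)$ for all pairs of orthogonal vectors $u,v\in\mathbb{C}^n\setminus\{0\}$. A function $f$ on $\mathbb{C}^n$ is sublinear if $f(v)/\|v\|\to0$ as $v\to\infty$. *)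

theory Defs
  imports "HOL-Analysis.Analysis"
begin

definition herm_inner :: "complex^'n \<Rightarrow> complex^'n \<Rightarrow> complex" where
  "herm_inner u v = (\<Sum>i\<in>UNIV. u$i * cnj (v$i))"

definition skew_herm :: "complex^'n^'n \<Rightarrow> bool" where
  "skew_herm X \<longleftrightarrow> (\<forall>i j. cnj (X$j$i) = - (X$i$j))"

definition gn :: "((complex^'n) \<times> (complex^'n^'n)) set" where
  "gn = {(v, X). skew_herm X}"

definition lie_bracket ::
  "(complex^'n) \<times> (complex^'n^'n) \<Rightarrow> (complex^'n) \<times> (complex^'n^'n) \<Rightarrow> (complex^'n) \<times> (complex^'n^'n)" where
  "lie_bracket A B = (snd A *v fst B - snd B *v fst A, snd A ** snd B - snd B ** snd A)"

definition lie_quasi_state :: "((complex^'n) \<times> (complex^'n^'n) \<Rightarrow> real) \<Rightarrow> bool" where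
  "lie_quasi_state \<zeta> \<longleftrightarrow>
     (\<forall>A\<in>gn. \<forall>B\<in>gn. lie_bracket A B = 0 \<longrightarrow>
        (\<forall>a b::real. \<zeta> (a *\<^sub>R A + b *\<^sub>R B) = a * \<zeta> A + b * \<zeta> B))"

definition normalized :: "((complex^'n) \<times> (complex^'n^'n) \<Rightarrow> real) \<Rightarrow> bool" where
  "normalized \<zeta> \<longleftrightarrow> (\<forall>v. \<zeta> (v, 0) = 0) \<and> (\<forall>X. skew_herm X \<longrightarrow> \<zeta> (0, X) = 0)"

definition gen_frame_function :: "(complex^'n \<Rightarrow> real) \<Rightarrow> bool" where
  "gen_frame_function f \<longleftrightarrow> f 0 = 0 \<and>
     (\<forall>u v. u \<noteq> 0 \<longrightarrow> v \<noteq> 0 \<longrightarrow> herm_inner u v = 0 \<longrightarrow> f (u + v) = f u + f v)"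

definition sublinear :: "(complex^'n \<Rightarrow> real) \<Rightarrow> bool" where
  "sublinear f \<longleftrightarrow> ((\<lambda>v. f v / norm v) \<longlongrightarrow> 0) at_infinity"

definition f_zeta :: "((complex^'n) \<times> (complex^'n^'n) \<Rightarrow> real) \<Rightarrow> complex^'n \<Rightarrow> real" where
  "f_zeta \<zeta> w = \<zeta> ((- \<i>) *s w, mat \<i>)"

end

theory Submission imports Defs begin

lemma hi_sym: "herm_inner v u = cnj (herm_inner u v)"
  by (simp add: herm_inner_def mult.commute)

lemma hi_smult_left: "herm_inner (c *s u) v = c * herm_inner u v"
  by (simp add: herm_inner_def sum_distrib_left mult.assoc)

lemma hi_smult_right: "herm_inner u (c *s v) = cnj c * herm_inner u v"
  by (simp add: herm_inner_def sum_distrib_left mult_ac)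

lemma hi_add_left: "herm_inner (u + w) v = herm_inner u v + herm_inner w v"
  by (simp add: herm_inner_def distrib_right sum.distrib)

lemma hi_add_right: "herm_inner u (v + w) = herm_inner u v + herm_inner u w"
  by (simp add: herm_inner_def distrib_left sum.distrib)

lemma hi_diff_left: "herm_inner (u - w) v = herm_inner u v - herm_inner w v"
  by (simp add: herm_inner_def left_diff_distrib sum_subtractf)

lemma hi_diff_right: "herm_inner u (v - w) = herm_inner u v - herm_inner u w"
  by (simp add: herm_inner_def right_diff_distrib sum_subtractf)

lemma hi_zero[simp]: "herm_inner 0 v = 0" "herm_inner v 0 = 0"
  by (simp_all add: herm_inner_def)

lemma inner_hi: "inner u v = Re (herm_inner u v)"
  by (simp add: herm_inner_def inner_vec_def inner_complex_def Re_sum)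

lemma norm_hi: "(norm u)^2 = Re (herm_inner u u)"
  by (simp add: power2_norm_eq_inner inner_hi)

lemma hi_self_real: "herm_inner u u = of_real ((norm u)^2)"
proof -
  have "Im (herm_inner u u) = 0"
    by (simp add: herm_inner_def Im_sum)
  then show ?thesis using norm_hi[of u] by (simp add: complex_eq_iff)
qed

lemma scaleR_smult: "(c::real) *\<^sub>R (x::complex^'n) = complex_of_real c *s x"
proof -
  have "\<And>i. c *\<^sub>R (x$i) = complex_of_real c * x$i" by (simp add: scaleR_conv_of_real)
  then show ?thesis by (simp add: vec_eq_iff)
qed

lemma skew_adj:
  assumes "skew_herm X"
  shows "herm_inner (X *v u) w = - herm_inner u (X *v w)"
proof -
  have "herm_inner (X *v u) w = (\<Sum>i\<in>UNIV. \<Sum>j\<in>UNIV. X$i$j * u$j * cnj (w$i))"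
    by (simp add: herm_inner_def matrix_vector_mult_def sum_distrib_right)
  also have "\<dots> = (\<Sum>j\<in>UNIV. \<Sum>i\<in>UNIV. X$i$j * u$j * cnj (w$i))"
    by (rule sum.swap)
  also have "\<dots> = - (\<Sum>j\<in>UNIV. u$j * cnj (\<Sum>i\<in>UNIV. X$j$i * w$i))"
    using assms unfolding skew_herm_def
    by (simp add: sum_distrib_left sum_negf[symmetric] mult_ac)
  also have "\<dots> = - herm_inner u (X *v w)"
    by (simp add: herm_inner_def matrix_vector_mult_def)
  finally show ?thesis .
qed

lemma mv_scaleR: "X *v (c *\<^sub>R x) = c *\<^sub>R (X *v (x::complex^'n))"
  by (simp add: scaleR_smult vector_scalar_commute)

lemma cont_mv: "continuous_on S (\<lambda>x::complex^'n. (X::complex^'n^'m) *v x)"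
  unfolding matrix_vector_mult_def by (intro continuous_intros)

lemma quad_le_zero:
  fixes c d :: real
  assumes "\<And>t. 2 * t * c + t^2 * d \<le> 0"
  shows "c = 0"
proof -
  define t where "t = c / (\<bar>d\<bar> + 1)"
  have pos: "\<bar>d\<bar> + 1 > 0" by simp
  have "2 * t * c + t^2 * d \<le> 0" by (rule assms)
  hence "(\<bar>d\<bar> + 1)^2 * (2 * t * c + t^2 * d) \<le> 0"
    by (simp add: mult_nonneg_nonpos)
  moreover have "(\<bar>d\<bar> + 1)^2 * (2 * t * c + t^2 * d) = c^2 * (2 * (\<bar>d\<bar> + 1) + d)"
  proof -
    have tk: "c = t * (\<bar>d\<bar> + 1)" unfolding t_def using pos by simp
    have "\<And>k. k^2 * (2 * t * (t*k) + t^2 * d) = (t*k)^2 * (2 * k + d)"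
      by (simp add: power2_eq_square algebra_simps)
    from this[of "\<bar>d\<bar> + 1"] show ?thesis by (simp only: tk[symmetric])
  qed
  ultimately have "c^2 * (2 * (\<bar>d\<bar> + 1) + d) \<le> 0" by simp
  moreover have "2 * (\<bar>d\<bar> + 1) + d > 0" by (smt (verit))
  ultimately have "c^2 \<le> 0"
    by (metis mult_le_0_iff not_le)
  thus ?thesis by simp
qed

lemma norm_add_sq: "(norm (a + t *\<^sub>R b))^2 = (norm a)^2 + 2 * t * inner a b + t^2 * (norm b)^2"
  for a b :: "'a::real_inner"
  by (simp only: power2_norm_eq_inner) (simp add: inner_add inner_commute algebra_simps power2_eq_square)

lemma max_arg:
  fixes X :: "complex^'n^'n"
  assumes le: "\<And>y. (norm (X *v y))^2 \<le> \<sigma> * (norm y)^2"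
    and e: "(norm (X *v e))^2 = \<sigma> * (norm e)^2"
  shows "inner (X *v e) (X *v v) = \<sigma> * inner e v"
proof -
  have "2 * t * (inner (X *v e) (X *v v) - \<sigma> * inner e v)
        + t^2 * ((norm (X *v v))^2 - \<sigma> * (norm v)^2) \<le> 0" for t
  proof -
    have "(norm (X *v (e + t *\<^sub>R v)))^2 \<le> \<sigma> * (norm (e + t *\<^sub>R v))^2" by (rule le)
    also have "X *v (e + t *\<^sub>R v) = X *v e + t *\<^sub>R (X *v v)"
      by (simp add: matrix_vector_right_distrib mv_scaleR)
    finally show ?thesis using e by (simp add: norm_add_sq algebra_simps)
  qed
  then have "inner (X *v e) (X *v v) - \<sigma> * inner e v = 0"
    by (rule quad_le_zero)
  thus ?thesis by simp
qed

lemma skew_eigen: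
  fixes X :: "complex^'n^'n"
  assumes sk: "skew_herm X" and nz: "X \<noteq> 0"
  shows "\<exists>e \<mu>. norm e = 1 \<and> \<mu> \<noteq> 0 \<and> X *v e = (\<i> * complex_of_real \<mu>) *s e"
proof -
  have cpt: "compact (sphere (0::complex^'n) 1)" by simp
  obtain x0 :: "complex^'n" where "norm x0 = 1" using vector_choose_size[of 1] by auto
  hence ne: "sphere (0::complex^'n) 1 \<noteq> {}" by auto
  have cont: "continuous_on (sphere 0 1) (\<lambda>x. (norm (X *v x))^2)"
    by (intro continuous_intros cont_mv)
  obtain e where e1: "e \<in> sphere 0 1" and emax: "\<And>y. y \<in> sphere 0 1 \<Longrightarrow> (norm (X *v y))^2 \<le> (norm (X *v e))^2"
    using continuous_attains_sup[OF cpt ne cont] by blast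
  define \<sigma> where "\<sigma> = (norm (X *v e))^2"
  have ne1: "norm e = 1" using e1 by simp
  have le: "(norm (X *v y))^2 \<le> \<sigma> * (norm y)^2" for y
  proof (cases "y = 0")
    case True then show ?thesis by simp
  next
    case False
    have "(norm (X *v ((1/norm y) *\<^sub>R y)))^2 \<le> \<sigma>"
      unfolding \<sigma>_def using False by (intro emax) simp
    hence "(norm (X *v y))^2 / (norm y)^2 \<le> \<sigma>"
      by (simp add: mv_scaleR power_divide)
    thus ?thesis using False by (simp add: divide_le_eq mult.commute)
  qed
  have eq: "(norm (X *v e))^2 = \<sigma> * (norm e)^2" using ne1 by (simp add: \<sigma>_def)
  have key: "inner (X *v e) (X *v v) = \<sigma> * inner e v" for v
    by (rule max_arg[OF le eq])
  define z where "z = - (X *v (X *v e)) - \<sigma> *\<^sub>R e"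
  have "inner z v = 0" for v
  proof -
    have "inner (X *v (X *v e)) v = - inner (X *v e) (X *v v)"
      using skew_adj[OF sk, of "X *v e" v] by (simp add: inner_hi)
    thus ?thesis using key[of v] unfolding z_def
      by (simp add: inner_diff_left)
  qed
  hence "inner z z = 0" by blast
  hence "z = 0" by simp
  hence XXe: "X *v (X *v e) = - (\<sigma> *\<^sub>R e)" unfolding z_def
    by (metis add.inverse_inverse diff_0 eq_iff_diff_eq_0 minus_diff_eq diff_minus_eq_add)
  have "\<exists>x. X *v x \<noteq> 0" using nz matrix_eq[of X 0] by auto
  then obtain x where xnz: "X *v x \<noteq> 0" by blast
  hence "x \<noteq> 0" by auto
  have "0 < (norm (X *v x))^2" using xnz by simp
  also have "\<dots> \<le> \<sigma> * (norm x)^2" by (rule le)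
  finally have spos: "\<sigma> > 0" using \<open>x \<noteq> 0\<close>
    by (metis mult_le_0_iff norm_ge_zero not_le zero_le_power2)
  define s where "s = sqrt \<sigma>"
  have spos': "s > 0" and ss: "s * s = \<sigma>" using spos by (simp_all add: s_def)
  define w where "w = X *v e + (\<i> * complex_of_real s) *s e"
  have Xw: "X *v w = (\<i> * complex_of_real s) *s w"
  proof -
    have "X *v w = - (\<sigma> *\<^sub>R e) + (\<i> * complex_of_real s) *s (X *v e)"
      unfolding w_def by (simp add: matrix_vector_right_distrib vector_scalar_commute XXe)
    also have "\<dots> = (\<i> * complex_of_real s) *s w"
      unfolding w_def scaleR_smult using ss
      by (simp add: vec_eq_iff algebra_simps)
         (metis of_real_mult)
    finally show ?thesis .
  qed
  show ?thesis
  proof (cases "w = 0")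
    case True
    hence "X *v e = (\<i> * complex_of_real (- s)) *s e"
      unfolding w_def by (simp add: vector_smult_lneg eq_neg_iff_add_eq_0)
    thus ?thesis using ne1 spos' by (intro exI[of _ e] exI[of _ "-s"]) simp
  next
    case False
    define e' where "e' = (1 / norm w) *\<^sub>R w"
    have "norm e' = 1" using False by (simp add: e'_def)
    moreover have "X *v e' = (\<i> * complex_of_real s) *s e'"
      unfolding e'_def by (simp only: mv_scaleR Xw) (simp add: scaleR_smult vector_smult_assoc mult.commute)
    ultimately show ?thesis using spos' by (intro exI[of _ e'] exI[of _ s]) simp
  qed
qed


definition proj :: "complex^'n \<Rightarrow> complex^'n^'n" where
  "proj e = (\<chi> i j. e$i * cnj (e$j))"

definition sm :: "complex \<Rightarrow> complex^'n^'n \<Rightarrow> complex^'n^'n" where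
  "sm c M = (\<chi> i j. c * M$i$j)"

definition herm :: "complex^'n^'n \<Rightarrow> bool" where
  "herm M \<longleftrightarrow> (\<forall>i j. cnj (M$j$i) = M$i$j)"

lemma proj_mv: "proj e *v v = herm_inner v e *s e"
  by (simp add: proj_def herm_inner_def matrix_vector_mult_def vec_eq_iff sum_distrib_left mult_ac)

lemma sm_mv: "sm c M *v v = c *s (M *v v)"
  by (simp add: sm_def matrix_vector_mult_def vec_eq_iff sum_distrib_left mult_ac)

lemma herm_proj: "herm (proj e)" by (simp add: herm_def proj_def mult.commute)
lemma herm_one: "herm (mat 1)" by (simp add: herm_def mat_def)
lemma herm_diff: "herm A \<Longrightarrow> herm B \<Longrightarrow> herm (A - B)" by (simp add: herm_def)

lemma skew_sm: "herm M \<Longrightarrow> skew_herm (sm (\<i> * complex_of_real \<mu>) M)"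
  by (simp add: herm_def skew_herm_def sm_def)

lemma skew_sm1: "herm M \<Longrightarrow> skew_herm (sm \<i> M)"
  using skew_sm[of M 1] by simp

lemma skew_diff: "skew_herm A \<Longrightarrow> skew_herm B \<Longrightarrow> skew_herm (A - B)"
  by (simp add: skew_herm_def)

lemma skew_mat_i: "skew_herm (mat \<i> :: complex^'n^'n)"
  by (simp add: skew_herm_def mat_def)

lemma skew_zero: "skew_herm (0 :: complex^'n^'n)"
  by (simp add: skew_herm_def)

lemma mat_i_split: "(mat \<i> :: complex^'n^'n) = sm \<i> M + sm \<i> (mat 1 - M)"
  by (simp add: vec_eq_iff sm_def mat_def algebra_simps)

lemma hi_unit: "norm e = 1 \<Longrightarrow> herm_inner e e = 1"
  using hi_self_real[of e] by simp

lemma proj_idem: "norm e = 1 \<Longrightarrow> proj e *v (proj e *v v) = proj e *v v"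
  by (simp add: proj_mv hi_smult_left hi_unit)

lemma bracket_zero:
  "lie_bracket (a, X) (b, Y) = 0 \<longleftrightarrow> X *v b = Y *v a \<and> X ** Y = Y ** X"
  by (simp add: lie_bracket_def zero_prod_def)

lemma qs_add:
  assumes "lie_quasi_state \<zeta>" "skew_herm X" "skew_herm Y" "X *v b = Y *v a" "X ** Y = Y ** X"
  shows "\<zeta> (a + b, X + Y) = \<zeta> (a, X) + \<zeta> (b, Y)"
proof -
  have "lie_bracket (a, X) (b, Y) = 0" using assms by (simp add: bracket_zero)
  moreover have "(a, X) \<in> gn" "(b, Y) \<in> gn" using assms by (simp_all add: gn_def)
  ultimately have "\<zeta> (1 *\<^sub>R (a, X) + 1 *\<^sub>R (b, Y)) = 1 * \<zeta> (a, X) + 1 * \<zeta> (b, Y)"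
    using assms(1) unfolding lie_quasi_state_def by blast
  thus ?thesis by simp
qed

lemma qs_scale:
  assumes "lie_quasi_state \<zeta>" "skew_herm X"
  shows "\<zeta> (c *\<^sub>R a, c *\<^sub>R X) = c * \<zeta> (a, X)"
proof -
  have "lie_bracket (a, X) (a, X) = 0" by (simp add: bracket_zero)
  moreover have "(a, X) \<in> gn" using assms by (simp_all add: gn_def)
  ultimately have "\<zeta> (c *\<^sub>R (a, X) + 0 *\<^sub>R (a, X)) = c * \<zeta> (a, X) + 0 * \<zeta> (a, X)"
    using assms(1) unfolding lie_quasi_state_def by blast
  thus ?thesis by simp
qed

lemma commute_PQ:
  assumes "norm e = 1"
  shows "sm c (proj e) ** sm d (mat 1 - proj e) = sm d (mat 1 - proj e) ** sm c (proj e)"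
proof -
  have "(sm c (proj e) ** sm d (mat 1 - proj e)) *v v = (sm d (mat 1 - proj e) ** sm c (proj e)) *v v" for v
    using proj_idem[OF assms, of v]
    by (simp add: matrix_vector_mul_assoc[symmetric] sm_mv matrix_vector_mult_diff_rdistrib
          vector_scalar_commute matrix_vector_mult_diff_distrib vector_smult_assoc)
  thus ?thesis by (simp add: matrix_eq)
qed

lemma zeta_P:
  assumes q: "lie_quasi_state \<zeta>" and nm: "normalized \<zeta>" and e: "norm e = 1" and c: "proj e *v c = c"
  shows "\<zeta> (c, sm \<i> (proj e)) = \<zeta> (c, mat \<i>)"
proof -
  have "\<zeta> (c + 0, sm \<i> (proj e) + sm \<i> (mat 1 - proj e)) = \<zeta> (c, sm \<i> (proj e)) + \<zeta> (0, sm \<i> (mat 1 - proj e))"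
    using c by (intro qs_add[OF q] skew_sm1 herm_proj herm_diff herm_one commute_PQ e)
      (simp add: sm_mv matrix_vector_mult_diff_rdistrib)
  moreover have "\<zeta> (0, sm \<i> (mat 1 - proj e)) = 0"
    using nm by (simp add: normalized_def skew_sm1 herm_proj herm_diff herm_one)
  ultimately show ?thesis by (simp flip: mat_i_split)
qed


lemma unit_proj:
  assumes u: "u \<noteq> 0" and ed: "e = (1 / norm u) *\<^sub>R u"
  shows "norm e = 1" "proj e *v u = u" "herm_inner u v = 0 \<Longrightarrow> proj e *v v = 0"
proof -
  show "norm e = 1" using assms by simp
  have ee: "e = complex_of_real (1 / norm u) *s u" by (simp add: ed scaleR_smult)
  have hu: "herm_inner u e = complex_of_real (norm u)"
    unfolding ee hi_smult_right hi_self_real using assms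
    by (simp add: power2_eq_square)
  have "complex_of_real (norm u) *s (complex_of_real (1 / norm u) *s u) = u"
    using u by (simp add: vector_smult_assoc flip: of_real_mult)
  thus "proj e *v u = u" unfolding proj_mv hu by (simp add: ee)
  assume "herm_inner u v = 0"
  hence "herm_inner v u = 0" by (simp add: hi_sym[of v u])
  thus "proj e *v v = 0" by (simp add: proj_mv ee hi_smult_right)
qed

lemma frame:
  assumes q: "lie_quasi_state \<zeta>" and nm: "normalized \<zeta>"
  shows "gen_frame_function (f_zeta \<zeta>)"
  unfolding gen_frame_function_def
proof (intro conjI allI impI)
  show "f_zeta \<zeta> 0 = 0" using nm by (simp add: f_zeta_def normalized_def skew_mat_i)
  fix u v :: "complex^'a"
  assume u: "u \<noteq> 0" and v: "v \<noteq> 0" and o: "herm_inner u v = 0"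
  define e where "e = (1 / norm u) *\<^sub>R u"
  have e1: "norm e = 1" and Pu: "proj e *v u = u" and Pv: "proj e *v v = 0"
    using unit_proj[OF u e_def] o by simp_all
  define a where "a = (- \<i>) *s u"
  define b where "b = (- \<i>) *s v"
  have Pa: "proj e *v a = a" by (simp only: a_def vector_scalar_commute Pu)
  have Pb: "proj e *v b = 0" by (simp only: b_def vector_scalar_commute Pv vector_smult_rzero)
  have "f_zeta \<zeta> (u + v) = \<zeta> (a + b, sm \<i> (proj e) + sm \<i> (mat 1 - proj e))"
    by (simp add: f_zeta_def a_def b_def vector_add_ldistrib flip: mat_i_split)
  also have "\<dots> = \<zeta> (a, sm \<i> (proj e)) + \<zeta> (b, sm \<i> (mat 1 - proj e))"
    using Pa Pb by (intro qs_add[OF q] skew_sm1 herm_proj herm_diff herm_one commute_PQ e1)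
      (simp_all add: sm_mv matrix_vector_mult_diff_rdistrib)
  also have "\<zeta> (a, sm \<i> (proj e)) = f_zeta \<zeta> u"
    using zeta_P[OF q nm e1 Pa] by (simp add: f_zeta_def a_def)
  also have "\<zeta> (b, sm \<i> (mat 1 - proj e)) = f_zeta \<zeta> v"
  proof -
    have "\<zeta> (b + 0, sm \<i> (mat 1 - proj e) + sm \<i> (proj e)) = \<zeta> (b, sm \<i> (mat 1 - proj e)) + \<zeta> (0, sm \<i> (proj e))"
      using Pb by (intro qs_add[OF q] skew_sm1 herm_proj herm_diff herm_one commute_PQ[OF e1, symmetric])
        (simp_all add: sm_mv)
    moreover have "\<zeta> (0, sm \<i> (proj e)) = 0"
      using nm by (simp add: normalized_def skew_sm1 herm_proj)
    moreover have "sm \<i> (mat 1 - proj e) + sm \<i> (proj e) = mat \<i>"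
      by (simp add: mat_i_split[of "proj e"] add.commute)
    ultimately show ?thesis by (simp add: f_zeta_def b_def)
  qed
  finally show "f_zeta \<zeta> (u + v) = f_zeta \<zeta> u + f_zeta \<zeta> v" .
qed


lemma sm_scaleR: "sm (\<i> * complex_of_real \<mu>) M = \<mu> *\<^sub>R sm \<i> M"
  apply (simp add: sm_def vec_eq_iff)
  apply (simp add: scaleR_conv_of_real mult_ac)
  done

lemma term1:
  assumes q: "lie_quasi_state \<zeta>" and nm: "normalized \<zeta>" and e: "norm e = 1"
    and b: "proj e *v b = b" and mu: "\<mu> \<noteq> 0"
  shows "\<zeta> (b, sm (\<i> * complex_of_real \<mu>) (proj e)) = \<mu> * \<zeta> ((1/\<mu>) *\<^sub>R b, mat \<i>)"
proof -
  have "\<zeta> (b, sm (\<i> * complex_of_real \<mu>) (proj e)) = \<zeta> (\<mu> *\<^sub>R ((1/\<mu>) *\<^sub>R b), \<mu> *\<^sub>R sm \<i> (proj e))"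
    using mu by (simp add: sm_scaleR)
  also have "\<dots> = \<mu> * \<zeta> ((1/\<mu>) *\<^sub>R b, sm \<i> (proj e))"
    by (rule qs_scale[OF q skew_sm1[OF herm_proj]])
  also have "\<zeta> ((1/\<mu>) *\<^sub>R b, sm \<i> (proj e)) = \<zeta> ((1/\<mu>) *\<^sub>R b, mat \<i>)"
    by (rule zeta_P[OF q nm e]) (simp add: mv_scaleR b)
  finally show ?thesis .
qed

lemma subspace_ker: "subspace {x::complex^'n. (X::complex^'n^'n) *v x = 0}"
  unfolding subspace_def by (simp add: matrix_vector_right_distrib mv_scaleR)

lemma uniq:
  fixes \<zeta> \<zeta>' :: "(complex^'n) \<times> (complex^'n^'n) \<Rightarrow> real"
  assumes q: "lie_quasi_state \<zeta>" and nm: "normalized \<zeta>"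
    and q': "lie_quasi_state \<zeta>'" and nm': "normalized \<zeta>'"
    and agree: "\<And>x. \<zeta> (x, mat \<i>) = \<zeta>' (x, mat \<i>)"
  shows "skew_herm X \<Longrightarrow> \<zeta> (a, X) = \<zeta>' (a, X)"
proof -
  have "\<forall>X a. skew_herm X \<longrightarrow> DIM(complex^'n) - dim {x::complex^'n. X *v x = 0} = m
          \<longrightarrow> \<zeta> (a, X) = \<zeta>' (a, X)" for m
  proof (induction m rule: less_induct)
    case (less m)
    show ?case
    proof (intro allI impI)
      fix X :: "complex^'n^'n" and a
      assume sk: "skew_herm X" and mX: "DIM(complex^'n) - dim {x::complex^'n. X *v x = 0} = m"
      show "\<zeta> (a, X) = \<zeta>' (a, X)"
      proof (cases "X = 0")
        case True
        then show ?thesis using nm nm' by (simp add: normalized_def)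
      next
        case False
        obtain e \<mu> where e1: "norm e = 1" and mu: "\<mu> \<noteq> 0"
          and Xe: "X *v e = (\<i> * complex_of_real \<mu>) *s e"
          using skew_eigen[OF sk False] by blast
        define P where "P = proj e"
        define c where "c = \<i> * complex_of_real \<mu>"
        define Y where "Y = X - sm c P"
        have skP: "skew_herm (sm c P)" unfolding c_def P_def by (rule skew_sm[OF herm_proj])
        have skY: "skew_herm Y" unfolding Y_def by (rule skew_diff[OF sk skP])
        have cc: "cnj c = - c" by (simp add: c_def)
        have XP: "X *v (P *v w) = c *s (P *v w)" for w
          by (simp add: P_def proj_mv vector_scalar_commute Xe c_def vector_smult_assoc mult.commute)
        have PX: "P *v (X *v w) = c *s (P *v w)" for w
        proof -
          have "herm_inner (X *v w) e = - herm_inner w (X *v e)" by (rule skew_adj[OF sk])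
          also have "\<dots> = c * herm_inner w e" by (simp add: Xe hi_smult_right cc flip: c_def)
          finally show ?thesis by (simp add: P_def proj_mv vector_smult_assoc)
        qed
        have PP: "P *v (P *v w) = P *v w" for w unfolding P_def by (rule proj_idem[OF e1])
        have YP: "Y *v (P *v w) = 0" for w
          by (simp add: Y_def matrix_vector_mult_diff_rdistrib sm_mv XP PP)
        have split: "\<zeta> (P *v a + (a - P *v a), sm c P + Y) = \<zeta> (P *v a, sm c P) + \<zeta> (a - P *v a, Y)"
          if "lie_quasi_state \<zeta>" for \<zeta>
        proof (rule qs_add[OF that skP skY])
          show "sm c P *v (a - P *v a) = Y *v (P *v a)"
            by (simp add: YP sm_mv matrix_vector_mult_diff_distrib PP)
          have "(sm c P ** Y) *v w = (Y ** sm c P) *v w" for w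
            by (simp add: matrix_vector_mul_assoc[symmetric] sm_mv Y_def
                matrix_vector_mult_diff_rdistrib matrix_vector_mult_diff_distrib vector_scalar_commute
                XP PX PP vector_ssub_ldistrib)
          thus "sm c P ** Y = Y ** sm c P" by (simp add: matrix_eq)
        qed
        have eqA: "(P *v a + (a - P *v a), sm c P + Y) = (a, X)" by (simp add: Y_def)
        have t1: "\<zeta> (P *v a, sm c P) = \<zeta>' (P *v a, sm c P)"
          unfolding c_def P_def
          using term1[OF q nm e1 _ mu, of "proj e *v a"] term1[OF q' nm' e1 _ mu, of "proj e *v a"]
            proj_idem[OF e1, of a] agree by simp
        have kerXY: "{x. X *v x = 0} \<subseteq> {x. Y *v x = 0}"
        proof clarify
          fix v assume Xv: "X *v v = 0"
          have "0 = P *v (X *v v)" using Xv by simp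
          also have "\<dots> = c *s (P *v v)" by (rule PX)
          finally have "P *v v = 0" using mu by (simp add: c_def vec_eq_iff)
          thus "Y *v v = 0" by (simp add: Y_def matrix_vector_mult_diff_rdistrib sm_mv Xv)
        qed
        have Pe: "P *v e = e" using hi_unit[OF e1] by (simp add: P_def proj_mv)
        have eY: "Y *v e = 0" using YP[of e] Pe by simp
        have "e \<noteq> 0" using e1 by auto
        then obtain i where "e$i \<noteq> 0" by (auto simp: vec_eq_iff)
        hence eX: "X *v e \<noteq> 0" using Xe mu by (auto simp: vec_eq_iff)
        have "span {x. X *v x = 0} \<subset> span {x::complex^'n. Y *v x = 0}"
          using kerXY eY eX by (auto simp: span_eq_iff[THEN iffD2, OF subspace_ker])
        hence "dim {x. X *v x = 0} < dim {x::complex^'n. Y *v x = 0}" by (rule dim_psubset)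
        moreover have "dim {x::complex^'n. Y *v x = 0} \<le> DIM(complex^'n)" by (rule dim_subset_UNIV)
        ultimately have "DIM(complex^'n) - dim {x::complex^'n. Y *v x = 0} < m" using mX by linarith
        hence t2: "\<zeta> (a - P *v a, Y) = \<zeta>' (a - P *v a, Y)" using less.IH skY by blast
        show ?thesis using split[OF q] split[OF q'] t1 t2 eqA by simp
      qed
    qed
  qed
  thus "skew_herm X \<Longrightarrow> \<zeta> (a, X) = \<zeta>' (a, X)" by blast
qed


lemma norm_mi: "norm ((- \<i>) *s (w::complex^'n)) = norm w"
proof -
  have "(norm ((- \<i>) *s w))^2 = (norm w)^2"
    unfolding norm_hi by (simp only: hi_smult_left hi_smult_right) simp
  thus ?thesis by (simp add: power2_eq_iff_nonneg)
qed

lemma skew_scaleR_mat_i: "skew_herm ((t::real) *\<^sub>R (mat \<i> :: complex^'n^'n))"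
proof -
  have "t *\<^sub>R (mat \<i> :: complex^'n^'n) = mat (\<i> * of_real t)"
    apply (simp add: vec_eq_iff mat_def)
    apply (simp add: scaleR_conv_of_real)
    done
  thus ?thesis by (simp add: skew_herm_def mat_def)
qed

lemma cont_part:
  fixes \<zeta> :: "(complex^'n) \<times> (complex^'n^'n) \<Rightarrow> real"
  assumes c: "continuous_on gn \<zeta>"
  shows "continuous_on UNIV (f_zeta \<zeta>)"
proof -
  have g: "continuous_on UNIV (\<lambda>w::complex^'n. ((- \<i>) *s w, mat \<i> :: complex^'n^'n))"
    unfolding vector_scalar_mult_def by (intro continuous_intros)
  have "continuous_on UNIV (\<lambda>w::complex^'n. \<zeta> ((- \<i>) *s w, mat \<i>))"
    by (rule continuous_on_compose2[OF c g]) (auto simp: gn_def skew_mat_i)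
  thus ?thesis by (simp add: f_zeta_def[abs_def])
qed

lemma sublin_part:
  fixes \<zeta> :: "(complex^'n) \<times> (complex^'n^'n) \<Rightarrow> real"
  assumes q: "lie_quasi_state \<zeta>" and nm: "normalized \<zeta>" and c: "continuous_on gn \<zeta>"
  shows "sublinear (f_zeta \<zeta>)"
  unfolding sublinear_def Lim_at_infinity
proof (intro allI impI)
  fix \<epsilon> :: real assume ep: "\<epsilon> > 0"
  define M :: "complex^'n^'n" where "M = mat \<i>"
  define K where "K = sphere (0::complex^'n) 1 \<times> ((\<lambda>t::real. t *\<^sub>R M) ` {0..1})"
  have cK: "compact K" unfolding K_def
    by (intro compact_Times compact_continuous_image continuous_intros) auto
  have Kgn: "K \<subseteq> gn" by (auto simp: K_def gn_def M_def skew_scaleR_mat_i)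
  have "uniformly_continuous_on K \<zeta>"
    by (rule compact_uniformly_continuous[OF continuous_on_subset[OF c Kgn] cK])
  then obtain d where d: "d > 0" and
    dK: "\<And>x x'. x \<in> K \<Longrightarrow> x' \<in> K \<Longrightarrow> dist x' x < d \<Longrightarrow> dist (\<zeta> x') (\<zeta> x) < \<epsilon>"
    unfolding uniformly_continuous_on_def using ep by metis
  show "\<exists>b. \<forall>w. b \<le> norm w \<longrightarrow> dist (f_zeta \<zeta> w / norm w) 0 < \<epsilon>"
  proof (intro exI allI impI)
    fix w :: "complex^'n"
    assume wb: "1 + norm M / d \<le> norm w"
    have wpos: "norm w \<ge> 1" using wb d by (smt (verit) divide_nonneg_pos norm_ge_zero)
    define t where "t = 1 / norm w"
    have t01: "t \<in> {0..1}" using wpos by (auto simp: t_def divide_le_eq_1)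
    define x where "x = t *\<^sub>R ((- \<i>) *s w)"
    have x1: "norm x = 1" using wpos by (simp only: x_def norm_scaleR norm_mi) (auto simp: t_def)
    have p: "(x, t *\<^sub>R M) \<in> K" using x1 t01 by (auto simp: K_def)
    have p0: "(x, 0 *\<^sub>R M) \<in> K" using x1 by (auto simp: K_def)
    have "norm M / d < norm w" using wb by simp
    hence "norm M < d * norm w" using d by (simp add: divide_less_eq mult.commute)
    hence "t * norm M < d" using wpos d by (simp add: t_def divide_less_eq mult.commute)
    hence dist: "dist (x, t *\<^sub>R M) (x, 0 *\<^sub>R M) < d"
      using t01 by (simp add: dist_Pair_Pair dist_norm)
    have z0: "\<zeta> (x, 0) = 0" using nm by (simp add: normalized_def)
    have "\<zeta> (x, t *\<^sub>R M) = t * \<zeta> ((- \<i>) *s w, M)"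
      unfolding x_def by (rule qs_scale[OF q]) (simp add: M_def skew_mat_i)
    hence zt: "\<zeta> (x, t *\<^sub>R M) = f_zeta \<zeta> w / norm w" by (simp add: f_zeta_def M_def t_def)
    show "dist (f_zeta \<zeta> w / norm w) 0 < \<epsilon>"
      using dK[OF p0 p dist] z0 by (simp add: zt dist_real_def)
  qed
qed

lemma agree_of_f:
  assumes "f_zeta \<zeta>' = f_zeta \<zeta>"
  shows "\<zeta>' (x, mat \<i>) = \<zeta> (x, mat \<i>)"
proof -
  have "(- \<i>) *s (\<i> *s x) = x" by (simp add: vector_smult_assoc)
  moreover have "f_zeta \<zeta>' (\<i> *s x) = f_zeta \<zeta> (\<i> *s x)" using assms by simp
  ultimately show ?thesis unfolding f_zeta_def by (metis (no_types))
qed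

theorem mainTheorem16:
  fixes \<zeta> :: "(complex^'n) \<times> (complex^'n^'n) \<Rightarrow> real"
  assumes "CARD('n) \<ge> 2"
    and "lie_quasi_state \<zeta>" and "normalized \<zeta>"
  shows "gen_frame_function (f_zeta \<zeta>)
    \<and> (continuous_on gn \<zeta> \<longrightarrow> continuous_on UNIV (f_zeta \<zeta>) \<and> sublinear (f_zeta \<zeta>))
    \<and> (\<forall>\<zeta>'. lie_quasi_state \<zeta>' \<and> normalized \<zeta>' \<and> f_zeta \<zeta>' = f_zeta \<zeta>
            \<longrightarrow> (\<forall>A\<in>gn. \<zeta>' A = \<zeta> A))
    \<and> ((\<forall>w. f_zeta \<zeta> w = 0) \<longrightarrow> (\<forall>A\<in>gn. \<zeta> A = 0))"
proof (intro conjI impI allI ballI)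
  show "gen_frame_function (f_zeta \<zeta>)" by (rule frame[OF assms(2,3)])
next
  assume "continuous_on gn \<zeta>"
  then show "continuous_on UNIV (f_zeta \<zeta>)" by (rule cont_part)
next
  assume "continuous_on gn \<zeta>"
  then show "sublinear (f_zeta \<zeta>)" by (rule sublin_part[OF assms(2,3)])
next
  fix \<zeta>' :: "(complex^'n) \<times> (complex^'n^'n) \<Rightarrow> real" and A :: "(complex^'n) \<times> (complex^'n^'n)"
  assume h: "lie_quasi_state \<zeta>' \<and> normalized \<zeta>' \<and> f_zeta \<zeta>' = f_zeta \<zeta>" and A: "A \<in> gn"
  obtain a X where AX: "A = (a, X)" by force
  have "skew_herm X" using A AX by (simp add: gn_def)
  then show "\<zeta>' A = \<zeta> A" unfolding AX
    using uniq[of \<zeta>' \<zeta>] h assms(2,3) agree_of_f[of \<zeta>' \<zeta>] by blast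
next
  fix A :: "(complex^'n) \<times> (complex^'n^'n)"
  assume h: "\<forall>w. f_zeta \<zeta> w = 0" and A: "A \<in> gn"
  define z0 :: "(complex^'n) \<times> (complex^'n^'n) \<Rightarrow> real" where "z0 = (\<lambda>_. 0)"
  have "lie_quasi_state z0" "normalized z0" by (simp_all add: z0_def lie_quasi_state_def normalized_def)
  moreover have "f_zeta z0 = f_zeta \<zeta>" using h by (auto simp: z0_def f_zeta_def)
  ultimately have ag: "\<forall>x. z0 (x, mat \<i>) = \<zeta> (x, mat \<i>)" using agree_of_f by blast
  obtain a X where AX: "A = (a, X)" by force
  have "skew_herm X" using A AX by (simp add: gn_def)
  then have "z0 A = \<zeta> A" unfolding AX
    using uniq[of z0 \<zeta>] \<open>lie_quasi_state z0\<close> \<open>normalized z0\<close> assms(2,3) ag by blast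
  thus "\<zeta> A = 0" by (simp add: z0_def)
qed

end
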